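(* Let $E\colon(0,1]\to\mathbb{R}$ be given by $E(\delta):=\big((\lfloor\delta^{-1}\rfloor+1)\delta-1\big)\log\lfloor\delta^{-1}\rfloor+\big(1-\lfloor\delta^{-1}\rfloor\delta\big)\log\big(\lfloor\delta^{-1}\rfloor+1\big)$ (base-2 logarithms, so $E(1)=0$). For every real $a\ge 0$ and every integer $t\ge 3$, the maximum of $E(\delta)-a\delta$ over $\delta\in[1/t,1]$ is attained at $\delta=1/s$ for some $s\in\{3,4,\dots,t\}$.
   Context: Logarithms are base 2. *)

theory Defs
  imports Complex_Main
begin

definition E :: "real \<Rightarrow> real" where
  "E \<delta> = (let m = real_of_int \<lfloor>1 / \<delta>\<rfloor> in
     ((m + 1) * \<delta> - 1) * log 2 m + (1 - m * \<delta>) * log 2 (m + 1))"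

end

theory Submission
  imports Defs
begin

lemma E_inv_nat:
  assumes "s \<ge> (1::nat)"
  shows "E (1 / real s) = log 2 (real s) / real s"
proof -
  have "\<lfloor>1 / (1 / real s)\<rfloor> = int s" by simp
  then show ?thesis using assms unfolding E_def Let_def by (simp add: field_simps)
qed

lemma E_comb:
  fixes d a :: real
  assumes "d > 0"
  defines "m \<equiv> real_of_int \<lfloor>1 / d\<rfloor>"
  assumes "m \<ge> 1"
  shows "E d - a * d = (m * ((m+1)*d - 1)) * ((log 2 m - a) / m)
        + ((m+1) * (1 - m*d)) * ((log 2 (m+1) - a) / (m+1))"
proof -
  have "E d = ((m + 1) * d - 1) * log 2 m + (1 - m * d) * log 2 (m + 1)"
    unfolding E_def Let_def m_def by simp
  moreover have "(m * ((m+1)*d - 1)) * ((log 2 m - a) / m) = ((m+1)*d - 1) * (log 2 m - a)"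
    using assms(3) by simp
  moreover have "((m+1) * (1 - m*d)) * ((log 2 (m+1) - a) / (m+1)) = (1 - m*d) * (log 2 (m+1) - a)"
    using assms(3) by simp
  ultimately show ?thesis by (simp add: algebra_simps)
qed

lemma log23: "log 2 (3::real) \<ge> 3/2"
proof -
  have "log 2 (9::real) = 2 * log 2 3"
    using log_nat_power[of 3 2 2] by simp
  moreover have "log 2 (8::real) = 3"
    using log_nat_power[of 2 2 3] by simp
  moreover have "log 2 (8::real) \<le> log 2 9" by simp
  ultimately show ?thesis by simp
qed

theorem corollary1:
  fixes a :: real and t :: nat
  assumes "a \<ge> 0" and "t \<ge> 3"
  shows "\<exists>s::nat. 3 \<le> s \<and> s \<le> t \<and>
           (\<forall>\<delta>\<in>{1 / real t..1}. E \<delta> - a * \<delta> \<le> E (1 / real s) - a * (1 / real s))"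
proof -
  define g where "g x = (log 2 x - a) / x" for x :: real
  define G where "G = Max ((\<lambda>k. g (real k)) ` {3..t})"
  have fin: "finite ((\<lambda>k. g (real k)) ` {3..t})" by simp
  have ne: "(\<lambda>k. g (real k)) ` {3..t} \<noteq> {}" using assms by auto
  obtain s where s: "s \<in> {3..t}" "g (real s) = G"
    using Max_in[OF fin ne] unfolding G_def by auto
  have ge3: "g (real k) \<le> G" if "k \<in> {3..t}" for k
    unfolding G_def using that fin by auto
  have g3: "g 3 \<le> G" using ge3[of 3] assms by simp
  have g1: "g 1 \<le> g 3" using log23 assms(1) unfolding g_def by simp
  have g2: "g 2 \<le> g 3" using log23 assms(1) unfolding g_def by simp
  have gall: "g (real k) \<le> G" if kk: "1 \<le> k" "k \<le> t" for k
  proof -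
    consider "k = 1" | "k = 2" | "k \<ge> 3" using kk by linarith
    then show ?thesis
    proof cases
      case 1 then show ?thesis using g1 g3 by simp
    next
      case 2 then show ?thesis using g2 g3 by simp
    next
      case 3 then show ?thesis using ge3 kk by simp
    qed
  qed
  have Es: "E (1 / real s) - a * (1 / real s) = G"
    using s E_inv_nat[of s] unfolding g_def by (simp add: diff_divide_distrib)
  show ?thesis
  proof (intro exI[of _ s] conjI ballI)
    show "3 \<le> s" "s \<le> t" using s by auto
  next
    fix d assume d: "d \<in> {1 / real t..1}"
    have tpos: "real t > 0" using assms by simp
    have dpos: "d > 0"
    proof -
      have "1 / real t > 0" using tpos by simp
      then show ?thesis using d by (simp only: atLeastAtMost_iff) linarith
    qed
    define m where "m = real_of_int \<lfloor>1 / d\<rfloor>"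
    have inv1: "1 / d \<ge> 1" using d dpos by auto
    have invt: "1 / d \<le> real t" using d dpos tpos by (auto simp: field_simps)
    have fl1: "(1::int) \<le> \<lfloor>1/d\<rfloor>" using inv1 by (simp add: le_floor_iff)
    have m1: "m \<ge> 1" unfolding m_def using fl1 by simp
    have mle: "m \<le> 1/d" unfolding m_def by (rule of_int_floor_le)
    have mgt: "1/d < m + 1" unfolding m_def by (rule real_of_int_floor_add_one_gt)
    have mt: "m \<le> real t" using mle invt by linarith
    obtain k :: nat where k: "m = real k"
    proof
      show "m = real (nat \<lfloor>1/d\<rfloor>)" unfolding m_def using of_nat_nat[of "\<lfloor>1/d\<rfloor>"] fl1 by linarith
    qed
    have k1: "1 \<le> k" "k \<le> t" using k m1 mt by auto
    have mu: "m * ((m+1)*d - 1) \<ge> 0"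
    proof -
      have "1 \<le> (m+1) * d" using mgt dpos by (simp add: field_simps)
      then show ?thesis using m1 by simp
    qed
    have nu: "(m+1) * (1 - m*d) \<ge> 0"
    proof -
      have "m * d \<le> 1" using mle dpos by (simp add: field_simps)
      then show ?thesis using m1 by simp
    qed
    have sum1: "m * ((m+1)*d - 1) + (m+1) * (1 - m*d) = 1" by (simp add: algebra_simps)
    have eq: "E d - a * d = (m * ((m+1)*d - 1)) * g m + ((m+1) * (1 - m*d)) * g (m+1)"
      using E_comb[of d a, OF dpos m1[unfolded m_def], folded m_def] unfolding g_def .
    have gm: "g m \<le> G" using gall k1 k by simp
    have gm1: "((m+1) * (1 - m*d)) * g (m+1) \<le> ((m+1) * (1 - m*d)) * G"
    proof (cases "k < t")
      case True
      then have "g (m+1) \<le> G" using gall[of "k+1"] k by (simp add: add.commute)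
      then show ?thesis using nu by (simp add: mult_left_mono)
    next
      case False
      then have "m = real t" using k k1 by simp
      have a1: "1 \<le> real t * d" using d tpos by (auto simp: field_simps)
      have a2: "m * d \<le> 1" using mle dpos by (simp add: field_simps)
      have "m * d = 1" using a1 a2 \<open>m = real t\<close> by simp
      then show ?thesis by simp
    qed
    have "E d - a * d \<le> (m * ((m+1)*d - 1)) * G + ((m+1) * (1 - m*d)) * G"
      using eq gm1 mult_left_mono[OF gm mu] by linarith
    also have "\<dots> = G" using sum1 by (metis distrib_right mult_1)
    finally show "E d - a * d \<le> E (1 / real s) - a * (1 / real s)" using Es by simp
  qed
qed

end
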